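(* Let $G$ be an equilateral compact tree with $p\ge2$ vertices, edge length $\ell$, identically zero potentials, and let $b_1,\dots,b_p\in\mathbb{R}$. Then for each $r=1,2,\dots,p$, the entire function $z\mapsto z^{r-1}\phi(z^2,b_1,\dots,b_p)$ is not of sine type.
   Context: Setting: $G$ is a tree with vertices $v_1,\dots,v_p$ and edges $e_1,\dots,e_{p-1}$ of length $\ell>0$, each oriented arbitrarily and identified with $[0,\ell]$; on each edge $-y_j''=\lambda y_j$. For a vertex $v$ and incident edge $e_j$, $y_j(v)$ is $y_j(\ell)$ if $e_j$ is incoming, $y_j(0)$ if outgoing. Robin–Kirchhoff condition at $v_i$: continuity of $y_j(v_i)$ over incident edges and $\sum_{\text{in}}y_j'(\ell)-\sum_{\text{out}}y_k'(0)+b_iy(v_i)=0$. Characteristic function: with $s(\lambda,x)=\sin(\sqrt\lambda x)/\sqrt\lambda$, $c(\lambda,x)=\cos(\sqrt\lambda x)$ and $y_j=\alpha_js+\beta_jc$ on $e_j$, the vertex conditions form a $2g\times2g$ linear system; fixing for each $v_i$ an incident edge $e_{j(i)}$ and a fixed ordering in which $v_i$ contributes $d(v_i)-1$ continuity rows plus one principal row $\sum_{\text{in}}y_j'(\ell)-\sum_{\text{out}}y_k'(0)+b_iy_{j(i)}(v_i)=0$, $\phi(\lambda,b_1,\dots,b_p)$ is the determinant of its matrix. It is an entire even function of $z=\sqrt\lambda$. Sine type: an entire function $\omega$ of exponential type $\sigma>0$ is of sine type if its zeros lie in a strip $|\operatorname{Im}z|<h$, for some $h_1$ and $M_1,M_2>0$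 one has $M_1\le|\omega(x+ih_1)|\le M_2$ for all real $x$, and its exponential types in the upper and lower half-planes are equal. *)

theory Defs
  imports "HOL-Complex_Analysis.Complex_Analysis" "Jordan_Normal_Form.Determinant"
begin

text \<open>Trees: vertices 0..<p, edges 0..<p-1; edge j is oriented from src j (x = 0) to tgt j (x = l).\<close>

definition tree_adj :: "nat \<Rightarrow> (nat \<Rightarrow> nat) \<Rightarrow> (nat \<Rightarrow> nat) \<Rightarrow> (nat \<times> nat) set" where
  "tree_adj p src tgt = {(src j, tgt j) | j. j < p - 1} \<union> {(tgt j, src j) | j. j < p - 1}"

definition is_tree :: "nat \<Rightarrow> (nat \<Rightarrow> nat) \<Rightarrow> (nat \<Rightarrow> nat) \<Rightarrow> bool" where
  "is_tree p src tgt \<longleftrightarrow> p \<ge> 1 \<and>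
     (\<forall>j < p - 1. src j < p \<and> tgt j < p \<and> src j \<noteq> tgt j) \<and>
     (\<forall>u < p. \<forall>v < p. (u, v) \<in> (tree_adj p src tgt)\<^sup>*)"

definition sfun :: "complex \<Rightarrow> real \<Rightarrow> complex" where
  "sfun lam x = (if lam = 0 then complex_of_real x
                 else sin (csqrt lam * complex_of_real x) / csqrt lam)"

definition cfun :: "complex \<Rightarrow> real \<Rightarrow> complex" where
  "cfun lam x = cos (csqrt lam * complex_of_real x)"

text \<open>Unknowns: column 2k is alpha_k, column 2k+1 is beta_k (y_k = alpha_k s + beta_k c on edge k).
  val_coef: coefficients of y_k(v); der_coef: coefficients of the contribution of edge k to
  the Kirchhoff sum at v (+ y_k'(l) if incoming, - y_k'(0) if outgoing).\<close>

definition val_coef :: "real \<Rightarrow> complex \<Rightarrow> (nat \<Rightarrow> nat) \<Rightarrow> (nat \<Rightarrow> nat) \<Rightarrow> nat \<Rightarrow> nat \<Rightarrow> nat \<Rightarrow> complex" where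
  "val_coef l lam src tgt v k c =
     (if v = tgt k then (if c = 2*k then sfun lam l else if c = 2*k+1 then cfun lam l else 0)
      else if v = src k then (if c = 2*k+1 then 1 else 0)
      else 0)"

definition der_coef :: "real \<Rightarrow> complex \<Rightarrow> (nat \<Rightarrow> nat) \<Rightarrow> (nat \<Rightarrow> nat) \<Rightarrow> nat \<Rightarrow> nat \<Rightarrow> nat \<Rightarrow> complex" where
  "der_coef l lam src tgt v k c =
     (if v = tgt k then (if c = 2*k then cfun lam l else if c = 2*k+1 then - lam * sfun lam l else 0)
      else if v = src k then (if c = 2*k then -1 else 0)
      else 0)"

definition chosen_edge :: "nat \<Rightarrow> (nat \<Rightarrow> nat) \<Rightarrow> (nat \<Rightarrow> nat) \<Rightarrow> nat \<Rightarrow> nat" where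
  "chosen_edge p src tgt v = (LEAST k. k < p - 1 \<and> (src k = v \<or> tgt k = v))"

text \<open>Rows are indexed by the 2(p-1) vertex-edge incidences: row 2k is the incidence of edge k
  at its tail src k, row 2k+1 the incidence at its head tgt k.  For a vertex v, the incidence
  with the chosen edge j(v) gives the principal (Kirchhoff-Robin) row, every other incidence with
  edge k gives the continuity row y_{j(v)}(v) - y_k(v) = 0.\<close>

definition char_matrix ::
  "real \<Rightarrow> nat \<Rightarrow> (nat \<Rightarrow> nat) \<Rightarrow> (nat \<Rightarrow> nat) \<Rightarrow> (nat \<Rightarrow> real) \<Rightarrow> complex \<Rightarrow> complex Matrix.mat" where
  "char_matrix l p src tgt b lam =
     Matrix.mat (2 * (p - 1)) (2 * (p - 1)) (\<lambda>(r, c).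
       let k = r div 2;
           v = (if even r then src k else tgt k);
           j = chosen_edge p src tgt v
       in if k = j
          then (\<Sum>k' < p - 1. der_coef l lam src tgt v k' c)
               + complex_of_real (b v) * val_coef l lam src tgt v j c
          else val_coef l lam src tgt v j c - val_coef l lam src tgt v k c)"

definition char_fun ::
  "real \<Rightarrow> nat \<Rightarrow> (nat \<Rightarrow> nat) \<Rightarrow> (nat \<Rightarrow> nat) \<Rightarrow> (nat \<Rightarrow> real) \<Rightarrow> complex \<Rightarrow> complex" where
  "char_fun l p src tgt b lam = Determinant.det (char_matrix l p src tgt b lam)"

definition exp_type_on :: "complex set \<Rightarrow> (complex \<Rightarrow> complex) \<Rightarrow> ereal" where
  "exp_type_on S f = Inf {ereal tau | tau. \<exists>A. \<forall>z\<in>S. norm (f z) \<le> A * exp (tau * norm z)}"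

definition sine_type :: "(complex \<Rightarrow> complex) \<Rightarrow> bool" where
  "sine_type w \<longleftrightarrow>
     w holomorphic_on UNIV \<and>
     (\<exists>\<sigma>>0. exp_type_on UNIV w = ereal \<sigma>) \<and>
     (\<exists>h. \<forall>z. w z = 0 \<longrightarrow> \<bar>Im z\<bar> < h) \<and>
     (\<exists>h1 M1 M2. M1 > 0 \<and> M2 > 0 \<and>
        (\<forall>x::real. M1 \<le> norm (w (Complex x h1)) \<and> norm (w (Complex x h1)) \<le> M2)) \<and>
     exp_type_on {z. Im z \<ge> 0} w = exp_type_on {z. Im z \<le> 0} w"

end

theory Submission
  imports Defs
begin

definition valS :: "complex \<Rightarrow> complex \<Rightarrow> (nat \<Rightarrow> nat) \<Rightarrow> (nat \<Rightarrow> nat) \<Rightarrow> nat \<Rightarrow> nat \<Rightarrow> nat \<Rightarrow> complex" where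
  "valS S C src tgt v k c =
     (if v = tgt k then (if c = 2*k then S else if c = 2*k+1 then C else 0)
      else if v = src k then (if c = 2*k+1 then 1 else 0)
      else 0)"

definition derS :: "complex \<Rightarrow> complex \<Rightarrow> (nat \<Rightarrow> nat) \<Rightarrow> (nat \<Rightarrow> nat) \<Rightarrow> nat \<Rightarrow> nat \<Rightarrow> nat \<Rightarrow> complex" where
  "derS S C src tgt v k c =
     (if v = tgt k then (if c = 2*k then C else if c = 2*k+1 then - S else 0)
      else if v = src k then (if c = 2*k then -1 else 0)
      else 0)"

definition Mg :: "nat \<Rightarrow> (nat \<Rightarrow> nat) \<Rightarrow> (nat \<Rightarrow> nat) \<Rightarrow> (nat \<Rightarrow> real) \<Rightarrow> complex \<Rightarrow> complex \<Rightarrow> complex \<Rightarrow> complex Matrix.mat" where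
  "Mg p src tgt b S C e =
     Matrix.mat (2 * (p - 1)) (2 * (p - 1)) (\<lambda>(r, c).
       let k = r div 2;
           v = (if even r then src k else tgt k);
           j = chosen_edge p src tgt v
       in if k = j
          then (\<Sum>k' < p - 1. derS S C src tgt v k' c)
               + e * complex_of_real (b v) * valS S C src tgt v j c
          else valS S C src tgt v j c - valS S C src tgt v k c)"

definition prin :: "nat \<Rightarrow> (nat \<Rightarrow> nat) \<Rightarrow> (nat \<Rightarrow> nat) \<Rightarrow> nat \<Rightarrow> bool" where
  "prin p src tgt r = (r div 2 = chosen_edge p src tgt (if even r then src (r div 2) else tgt (r div 2)))"

lemma csqrt_sq: "csqrt (z^2) = z \<or> csqrt (z^2) = - z"
  using power2_eq_iff power2_csqrt by blast

lemma sfun_sq: assumes "z \<noteq> 0" shows "sfun (z^2) l = sin (z * of_real l) / z"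
proof -
  have "z^2 \<noteq> 0" using assms by simp
  then show ?thesis using csqrt_sq[of z] unfolding sfun_def
    by (auto simp: sin_minus)
qed

lemma cfun_sq: "cfun (z^2) l = cos (z * of_real l)"
  using csqrt_sq[of z] unfolding cfun_def by (auto simp: cos_minus)

lemma val_scale: assumes "z \<noteq> 0"
  shows "val_coef l (z^2) src tgt v k c = valS (sin (z * of_real l)) (cos (z * of_real l)) src tgt v k c * (if even c then 1/z else 1)"
  unfolding val_coef_def valS_def sfun_sq[OF assms] cfun_sq by auto

lemma der_scale: assumes "z \<noteq> 0"
  shows "der_coef l (z^2) src tgt v k c = z * derS (sin (z * of_real l)) (cos (z * of_real l)) src tgt v k c * (if even c then 1/z else 1)"
  unfolding der_coef_def derS_def sfun_sq[OF assms] cfun_sq using assms by (auto simp: power2_eq_square)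

lemma entry_scale: assumes "z \<noteq> 0" "r < 2*(p-1)" "c < 2*(p-1)"
  shows "char_matrix l p src tgt b (z^2) $$ (r,c) =
    (if prin p src tgt r then z else 1) * Mg p src tgt b (sin (z * of_real l)) (cos (z * of_real l)) (1/z) $$ (r,c)
      * (if even c then 1/z else 1)"
  using assms unfolding char_matrix_def Mg_def prin_def Let_def
  by (auto simp: val_scale[OF assms(1)] der_scale[OF assms(1)] sum_distrib_left sum_distrib_right
       algebra_simps)

lemma det_scale:
  fixes A B :: "'a::comm_ring_1 mat"
  assumes A: "A \<in> carrier_mat n n" and B: "B \<in> carrier_mat n n"
    and e: "\<And>i j. i < n \<Longrightarrow> j < n \<Longrightarrow> A $$ (i,j) = a i * B $$ (i,j) * d j"
  shows "det A = (\<Prod>i=0..<n. a i) * (\<Prod>j=0..<n. d j) * det B"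
proof -
  have "signof q * (\<Prod>i=0..<n. A $$ (i, q i)) =
        (\<Prod>i=0..<n. a i) * (\<Prod>j=0..<n. d j) * (signof q * (\<Prod>i=0..<n. B $$ (i, q i)))"
    if q: "q permutes {0..<n}" for q
  proof -
    have "(\<Prod>i=0..<n. A $$ (i, q i)) = (\<Prod>i=0..<n. a i * B $$ (i, q i) * d (q i))"
      using q by (intro prod.cong) (auto simp: e permutes_in_image)
    also have "\<dots> = (\<Prod>i=0..<n. a i) * (\<Prod>i=0..<n. B $$ (i, q i)) * (\<Prod>i=0..<n. d (q i))"
      by (simp add: prod.distrib)
    also have "(\<Prod>i=0..<n. d (q i)) = (\<Prod>j=0..<n. d j)"
      using prod.permute[OF q, of d] by (simp add: comp_def)
    finally show ?thesis by (simp add: algebra_simps)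
  qed
  then show ?thesis unfolding det_def'[OF A] det_def'[OF B] sum_distrib_left
    by (intro sum.cong) auto
qed

lemma tree_inc: assumes "is_tree p src tgt" "p \<ge> 2" "v < p"
  shows "\<exists>k<p-1. src k = v \<or> tgt k = v"
proof -
  define u where "u = (if v = 0 then 1 else 0::nat)"
  have u: "u < p" "u \<noteq> v" using assms by (auto simp: u_def)
  have "(v, u) \<in> (tree_adj p src tgt)\<^sup>*" using assms u unfolding is_tree_def by blast
  then obtain y where "(v,y) \<in> tree_adj p src tgt" using u by (metis converse_rtranclE)
  then show ?thesis unfolding tree_adj_def by auto
qed

lemma chosen: assumes "is_tree p src tgt" "p \<ge> 2" "v < p"
  shows "chosen_edge p src tgt v < p-1 \<and> (src (chosen_edge p src tgt v) = v \<or> tgt (chosen_edge p src tgt v) = v)"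
  unfolding chosen_edge_def using tree_inc[OF assms] by (rule LeastI_ex)

definition rowof :: "nat \<Rightarrow> (nat \<Rightarrow> nat) \<Rightarrow> (nat \<Rightarrow> nat) \<Rightarrow> nat \<Rightarrow> nat" where
  "rowof p src tgt v = (if src (chosen_edge p src tgt v) = v then 2 * chosen_edge p src tgt v
      else 2 * chosen_edge p src tgt v + 1)"

definition vtx :: "(nat \<Rightarrow> nat) \<Rightarrow> (nat \<Rightarrow> nat) \<Rightarrow> nat \<Rightarrow> nat" where
  "vtx src tgt r = (if even r then src (r div 2) else tgt (r div 2))"

lemma rowof_props: assumes "is_tree p src tgt" "p \<ge> 2" "v < p"
  shows "rowof p src tgt v < 2*(p-1)" "prin p src tgt (rowof p src tgt v)"
    "vtx src tgt (rowof p src tgt v) = v"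
  using chosen[OF assms] unfolding rowof_def prin_def vtx_def by auto

lemma prin_rowof: assumes "is_tree p src tgt" "r < 2*(p-1)" "prin p src tgt r"
  shows "rowof p src tgt (vtx src tgt r) = r"
proof -
  have k: "r div 2 < p - 1" using assms(2) by auto
  then have ne: "src (r div 2) \<noteq> tgt (r div 2)" using assms(1) unfolding is_tree_def by auto
  show ?thesis using assms(3) ne unfolding rowof_def prin_def vtx_def
    by (cases "even r") (auto elim!: evenE oddE)
qed

lemma vtx_lt: assumes "is_tree p src tgt" "r < 2*(p-1)" shows "vtx src tgt r < p"
proof -
  have k: "r div 2 < p - 1" using assms(2) by auto
  then show ?thesis using assms(1) unfolding is_tree_def vtx_def by auto
qed

lemma card_prin: assumes "is_tree p src tgt" "p \<ge> 2"
  shows "card {r\<in>{0..<2*(p-1)}. prin p src tgt r} = p"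
proof -
  have "bij_betw (rowof p src tgt) {0..<p} {r\<in>{0..<2*(p-1)}. prin p src tgt r}"
  proof (rule bij_betwI[where g = "vtx src tgt"])
    show "rowof p src tgt \<in> {0..<p} \<rightarrow> {r \<in> {0..<2 * (p - 1)}. prin p src tgt r}"
      using rowof_props[OF assms] by auto
    show "vtx src tgt \<in> {r \<in> {0..<2 * (p - 1)}. prin p src tgt r} \<rightarrow> {0..<p}"
      using vtx_lt[OF assms(1)] by auto
  qed (use rowof_props[OF assms] prin_rowof[OF assms(1)] in auto)
  then show ?thesis by (simp add: bij_betw_same_card[symmetric])
qed

lemma prod_rows: assumes "is_tree p src tgt" "p \<ge> 2"
  shows "(\<Prod>r=0..<2*(p-1). if prin p src tgt r then z else 1) = z ^ p"
proof -
  have "(\<Prod>r=0..<2*(p-1). if prin p src tgt r then z else 1) = z ^ card ({0..<2*(p-1)} \<inter> Collect (prin p src tgt))"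
    by (subst prod.If_cases) simp_all
  also have "{0..<2*(p-1)} \<inter> Collect (prin p src tgt) = {r\<in>{0..<2*(p-1)}. prin p src tgt r}" by auto
  finally show ?thesis using card_prin[OF assms] by simp
qed

lemma prod_cols: "(\<Prod>c=0..<2*m. if even c then w else 1) = w ^ m"
proof (induction m)
  case 0 then show ?case by simp
next
  case (Suc m)
  have "{0..<2 * Suc m} = insert (2*m+1) (insert (2*m) {0..<2*m})" by auto
  then show ?case using Suc by simp
qed

lemma sum2: assumes "a < (n::nat)" "a' < n" "a \<noteq> a'"
  shows "(\<Sum>c=0..<n. (if c = a then A else if c = a' then B else 0) * X c) = A * X a + B * (X a' :: complex)"
proof -
  have "(\<Sum>c=0..<n. (if c = a then A else if c = a' then B else 0) * X c)
      = (\<Sum>c=0..<n. (if c = a then A * X a else 0) + (if c = a' then B * X a' else 0))"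
    using assms(3) by (intro sum.cong) auto
  also have "\<dots> = A * X a + B * X a'" using assms by (simp add: sum.distrib sum.delta sum.delta')
  finally show ?thesis .
qed

lemma sum1: assumes "a < (n::nat)"
  shows "(\<Sum>c=0..<n. (if c = a then A else 0) * X c) = A * (X a :: complex)"
proof -
  have "(\<Sum>c=0..<n. (if c = a then A else 0) * X c) = (\<Sum>c=0..<n. (if c = a then A * X a else 0))"
    by (intro sum.cong) auto
  also have "\<dots> = A * X a" using assms by (simp add: sum.delta sum.delta')
  finally show ?thesis .
qed

lemma Y_formula: assumes "k < p - 1"
  shows "(\<Sum>c=0..<2*(p-1). valS S C src tgt v k c * X c) =
    (if v = tgt k then S * X (2*k) + C * X (2*k+1) else if v = src k then X (2*k+1) else 0)"
proof -
  have a: "2*k < 2*(p-1)" "2*k+1 < 2*(p-1)" using assms by auto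
  show ?thesis
  proof (cases "v = tgt k")
    case True then show ?thesis unfolding valS_def using sum2[OF a, of S C X] by simp
  next
    case False
    show ?thesis
    proof (cases "v = src k")
      case True then show ?thesis using False sum1[OF a(2), of 1 X] unfolding valS_def by simp
    qed (use False in \<open>simp add: valS_def\<close>)
  qed
qed

lemma D_formula: assumes "k < p - 1"
  shows "(\<Sum>c=0..<2*(p-1). derS S C src tgt v k c * X c) =
    (if v = tgt k then C * X (2*k) - S * X (2*k+1) else if v = src k then - X (2*k) else 0)"
proof -
  have a: "2*k < 2*(p-1)" "2*k+1 < 2*(p-1)" using assms by auto
  show ?thesis
  proof (cases "v = tgt k")
    case True then show ?thesis unfolding derS_def using sum2[OF a, of C "-S" X] by simp
  next
    case False
    show ?thesis
    proof (cases "v = src k")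
      case True then show ?thesis using False sum1[OF a(1), of "-1" X] unfolding derS_def by simp
    qed (use False in \<open>simp add: derS_def\<close>)
  qed
qed

lemma Mg_carrier: "Mg p src tgt b S C e \<in> carrier_mat (2*(p-1)) (2*(p-1))"
  unfolding Mg_def by simp

lemma row_eq: assumes "r < 2*(p-1)" "x \<in> carrier_vec (2*(p-1))"
  shows "(Mg p src tgt b S C e *\<^sub>v x) $ r = (\<Sum>c=0..<2*(p-1). Mg p src tgt b S C e $$ (r,c) * x $ c)"
  using assms unfolding Mg_def by (auto simp: scalar_prod_def)

lemma Mg_nonsing:
  assumes T: "is_tree p src tgt" and p2: "p \<ge> 2" and S0: "S \<noteq> 0" and SC: "S^2 + C^2 = 1"
    and C1: "norm C > 1"
  shows "det (Mg p src tgt b S C 0) \<noteq> 0"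
proof
  let ?n = "2*(p-1)"
  let ?M = "Mg p src tgt b S C 0"
  assume "det ?M = 0"
  then obtain x where x: "x \<in> carrier_vec ?n" "x \<noteq> 0\<^sub>v ?n" "?M *\<^sub>v x = 0\<^sub>v ?n"
    using det_0_iff_vec_prod_zero[OF Mg_carrier] by blast
  define X where "X c = x $ c" for c
  define Y where "Y k v = (\<Sum>c=0..<?n. valS S C src tgt v k c * X c)" for k v
  define D where "D k v = (\<Sum>c=0..<?n. derS S C src tgt v k c * X c)" for k v
  define ch where "ch v = chosen_edge p src tgt v" for v
  define yv where "yv v = Y (ch v) v" for v
  have st: "src k < p" "tgt k < p" "src k \<noteq> tgt k" if "k < p - 1" for k
    using T that unfolding is_tree_def by auto
  have roweq: "(\<Sum>c=0..<?n. ?M $$ (r,c) * X c) = 0" if "r < ?n" for r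
    using row_eq[OF that x(1), where src=src and tgt=tgt and b=b and S=S and C=C and e=0] x(3) that unfolding X_def by simp
  have rowform: "(\<Sum>c=0..<?n. ?M $$ (r,c) * X c) =
      (if r div 2 = ch (vtx src tgt r) then (\<Sum>k'<p-1. D k' (vtx src tgt r))
       else Y (ch (vtx src tgt r)) (vtx src tgt r) - Y (r div 2) (vtx src tgt r))" if "r < ?n" for r
  proof (cases "r div 2 = ch (vtx src tgt r)")
    case True
    have "(\<Sum>c=0..<?n. ?M $$ (r,c) * X c) = (\<Sum>c=0..<?n. (\<Sum>k'<p-1. derS S C src tgt (vtx src tgt r) k' c * X c))"
      using that True by (intro sum.cong) (auto simp: Mg_def Let_def ch_def vtx_def sum_distrib_right)
    also have "\<dots> = (\<Sum>k'<p-1. D k' (vtx src tgt r))" unfolding D_def by (rule sum.swap)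
    finally show ?thesis using True by simp
  next
    case False
    have "(\<Sum>c=0..<?n. ?M $$ (r,c) * X c) = (\<Sum>c=0..<?n. valS S C src tgt (vtx src tgt r) (ch (vtx src tgt r)) c * X c - valS S C src tgt (vtx src tgt r) (r div 2) c * X c)"
      using that False by (intro sum.cong) (auto simp: Mg_def Let_def ch_def vtx_def algebra_simps)
    also have "\<dots> = Y (ch (vtx src tgt r)) (vtx src tgt r) - Y (r div 2) (vtx src tgt r)"
      unfolding Y_def by (simp add: sum_subtractf)
    finally show ?thesis using False by simp
  qed
  have claimA: "Y k (src k) = yv (src k) \<and> Y k (tgt k) = yv (tgt k)" if k: "k < p - 1" for k
  proof -
    have r1: "2*k < ?n" "2*k+1 < ?n" using k by auto
    have v1: "vtx src tgt (2*k) = src k" "vtx src tgt (2*k+1) = tgt k" unfolding vtx_def by auto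
    have d1: "(2*k) div 2 = k" "(2*k+1) div 2 = k" by auto
    have "Y k (src k) = yv (src k)"
      using roweq[OF r1(1)] rowform[OF r1(1)] unfolding v1 d1 yv_def by (auto split: if_splits)
    moreover have "Y k (tgt k) = yv (tgt k)"
      using roweq[OF r1(2)] rowform[OF r1(2)] unfolding v1 d1 yv_def by (auto split: if_splits)
    ultimately show ?thesis ..
  qed
  have b1: "X (2*k+1) = yv (src k)" and b2: "S * X (2*k) + C * X (2*k+1) = yv (tgt k)" if k: "k < p - 1" for k
    using claimA[OF k] Y_formula[OF k, of S C src tgt _ X] st[OF k] unfolding Y_def by auto
  have claimB: "(\<Sum>k<p-1. D k v) = 0" if v: "v < p" for v
  proof -
    note rp = rowof_props[OF T p2 v]
    have "rowof p src tgt v div 2 = ch v" using rp(2,3) unfolding prin_def vtx_def ch_def by simp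
    then show ?thesis using roweq[OF rp(1)] rowform[OF rp(1)] rp(3) by simp
  qed
  define oth where "oth k v = (if tgt k = v then src k else tgt k)" for k v
  define K where "K v = {k. k < p - 1 \<and> (tgt k = v \<or> src k = v)}" for v
  have SD: "S * D k v = (if tgt k = v \<or> src k = v then C * yv v - yv (oth k v) else 0)" if k: "k < p - 1" for k v
  proof -
    have "S * D k v = (if v = tgt k then S * (C * X (2*k) - S * X (2*k+1)) else if v = src k then - (S * X (2*k)) else 0)"
      using D_formula[OF k, of S C src tgt v X] unfolding D_def by simp
    also have "\<dots> = (if tgt k = v \<or> src k = v then C * yv v - yv (oth k v) else 0)"
    proof -
      have e1: "S * (C * X (2*k) - S * X (2*k+1)) = C * (S * X (2*k) + C * X (2*k+1)) - (S^2 + C^2) * X (2*k+1)"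
        by (simp add: algebra_simps power2_eq_square)
      show ?thesis using b1[OF k] b2[OF k] st[OF k] SC unfolding oth_def e1
        by (auto simp: algebra_simps)
    qed
    finally show ?thesis .
  qed
  have keq: "of_nat (card (K v)) * C * yv v = (\<Sum>k\<in>K v. yv (oth k v))" if v: "v < p" for v
  proof -
    have "0 = S * (\<Sum>k<p-1. D k v)" using claimB[OF v] by simp
    also have "\<dots> = (\<Sum>k<p-1. (if tgt k = v \<or> src k = v then C * yv v - yv (oth k v) else 0))"
      unfolding sum_distrib_left using SD by (intro sum.cong) auto
    also have "\<dots> = (\<Sum>k\<in>K v. C * yv v - yv (oth k v))"
      unfolding K_def by (subst sum.inter_filter[symmetric]) (auto intro: sum.cong simp: lessThan_def)
    also have "\<dots> = of_nat (card (K v)) * C * yv v - (\<Sum>k\<in>K v. yv (oth k v))"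
      by (simp add: sum_subtractf)
    finally show ?thesis by simp
  qed
  have finK: "finite (K v)" for v unfolding K_def by simp
  have othK: "oth k v < p" if "k \<in> K v" for k v using that st unfolding K_def oth_def by auto
  have cardK: "card (K v) \<ge> 1" if v: "v < p" for v
  proof -
    obtain k where "k < p - 1" "src k = v \<or> tgt k = v" using tree_inc[OF T p2 v] by blast
    then have "k \<in> K v" unfolding K_def by auto
    then show ?thesis using finK[of v] by (metis One_nat_def Suc_leI card_gt_0_iff empty_iff)
  qed
  define m where "m = Max ((\<lambda>v. norm (yv v)) ` {..<p})"
  have fin: "finite ((\<lambda>v. norm (yv v)) ` {..<p})" "(\<lambda>v. norm (yv v)) ` {..<p} \<noteq> {}" using p2 by (auto simp: lessThan_empty_iff)
  obtain v0 where v0: "v0 < p" "norm (yv v0) = m" using Max_in[OF fin] unfolding m_def by auto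
  have mge: "norm (yv v) \<le> m" if "v < p" for v unfolding m_def using fin that by (intro Max_ge) auto
  have "m = 0"
  proof (rule ccontr)
    assume "m \<noteq> 0"
    then have mpos: "m > 0" using v0 by (metis norm_ge_zero order_le_less)
    have "real (card (K v0)) * norm C * m = norm (of_nat (card (K v0)) * C * yv v0)"
      using v0 by (simp add: norm_mult)
    also have "\<dots> = norm (\<Sum>k\<in>K v0. yv (oth k v0))" using keq[OF v0(1)] by simp
    also have "\<dots> \<le> (\<Sum>k\<in>K v0. norm (yv (oth k v0)))" by (rule norm_sum)
    also have "\<dots> \<le> real (card (K v0)) * m" using sum_bounded_above[of "K v0" "\<lambda>k. norm (yv (oth k v0))" m] mge othK by auto
    finally have "real (card (K v0)) * norm C * m \<le> real (card (K v0)) * m" .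
    moreover have "real (card (K v0)) * m < real (card (K v0)) * norm C * m"
      using cardK[OF v0(1)] mpos C1 by (simp add: mult.assoc)
    ultimately show False by simp
  qed
  then have y0: "yv v = 0" if "v < p" for v using mge[OF that] by simp
  have X0: "X c = 0" if c: "c < ?n" for c
  proof -
    have k: "c div 2 < p - 1" using c by auto
    have o: "X (2*(c div 2)+1) = 0" using b1[OF k] y0 st[OF k] by simp
    have e: "S * X (2*(c div 2)) = 0" using b2[OF k] y0 st[OF k] o by simp
    show ?thesis
    proof (cases "even c")
      case True then show ?thesis using e S0 by (metis dvd_mult_div_cancel mult_eq_0_iff)
    next
      case False then show ?thesis using o by (metis odd_two_times_div_two_succ Suc_eq_plus1)
    qed
  qed
  have "x = 0\<^sub>v ?n" using x(1) X0 unfolding X_def by (intro eq_vecI) auto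
  then show False using x(2) by simp
qed

lemma holo_if[holomorphic_intros]:
  "f holomorphic_on S \<Longrightarrow> g holomorphic_on S \<Longrightarrow> (\<lambda>z. if P then f z else g z) holomorphic_on S"
  by (cases P) auto

lemma det_holo:
  assumes "\<And>x. F x \<in> carrier_mat n n"
    and "\<And>i j. i < n \<Longrightarrow> j < n \<Longrightarrow> (\<lambda>x. F x $$ (i,j)) holomorphic_on S"
  shows "(\<lambda>x. det (F x)) holomorphic_on S"
proof -
  have e: "(\<lambda>x. det (F x)) = (\<lambda>x. \<Sum>q \<in> {q. q permutes {0..<n}}. signof q * (\<Prod>i = 0..<n. F x $$ (i, q i)))"
    using det_def'[OF assms(1)] by auto
  show ?thesis unfolding e
    by (intro holomorphic_on_sum holomorphic_on_mult holomorphic_on_prod holomorphic_on_const assms(2))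
       (auto simp: permutes_in_image)
qed

lemma valS_holo: assumes "f holomorphic_on S" "g holomorphic_on S"
  shows "(\<lambda>x. valS (f x) (g x) src tgt v k c) holomorphic_on S"
  unfolding valS_def by (intro holo_if holomorphic_on_const assms)

lemma derS_holo: assumes "f holomorphic_on S" "g holomorphic_on S"
  shows "(\<lambda>x. derS (f x) (g x) src tgt v k c) holomorphic_on S"
  unfolding derS_def by (intro holo_if holomorphic_on_const holomorphic_on_minus assms)

lemma Mg_entry_holo:
  assumes "f holomorphic_on S" "g holomorphic_on S" "h holomorphic_on S"
    and "i < 2*(p-1)" "j < 2*(p-1)"
  shows "(\<lambda>x. Mg p src tgt b (f x) (g x) (h x) $$ (i,j)) holomorphic_on S"
proof -
  define v where "v = (if even i then src (i div 2) else tgt (i div 2))"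
  define jj where "jj = chosen_edge p src tgt v"
  have e: "(\<lambda>x. Mg p src tgt b (f x) (g x) (h x) $$ (i,j)) = (\<lambda>x. if i div 2 = jj
          then (\<Sum>k' < p - 1. derS (f x) (g x) src tgt v k' j)
               + h x * complex_of_real (b v) * valS (f x) (g x) src tgt v jj j
          else valS (f x) (g x) src tgt v jj j - valS (f x) (g x) src tgt v (i div 2) j)"
    using assms(4,5) unfolding Mg_def v_def jj_def Let_def by simp
  show ?thesis unfolding e
    by (intro holo_if holomorphic_on_add holomorphic_on_sum holomorphic_on_mult holomorphic_on_diff
        valS_holo derS_holo holomorphic_on_const assms(1-3))
qed

lemma Mg_det_holo:
  assumes "f holomorphic_on S" "g holomorphic_on S" "h holomorphic_on S"
  shows "(\<lambda>x. det (Mg p src tgt b (f x) (g x) (h x))) holomorphic_on S"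
  by (rule det_holo[OF Mg_carrier Mg_entry_holo[OF assms]])

lemma cos_i_gt: "norm (cos \<i>) > 1"
proof -
  define x :: real where "x = (exp 1 + inverse (exp 1)) / 2"
  have c: "cos \<i> = complex_of_real x"
    using cosh_real[of 1] unfolding x_def by simp
  have "exp (1::real) \<ge> 2"
    using exp_ge_add_one_self_aux[of "1::real"] by simp
  moreover have "inverse (exp (1::real)) > 0" by simp
  ultimately have "2 + 0 < exp (1::real) + inverse (exp 1)" by (rule add_le_less_mono)
  then have "x > 1" unfolding x_def by simp
  then show ?thesis unfolding c norm_of_real by simp
qed

lemma sin_i_ne: "sin \<i> \<noteq> 0"
proof
  assume "sin \<i> = 0"
  then obtain n::int where "\<i> = complex_of_real (real_of_int n * pi)" using sin_eq_0 by blast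
  then have "Im \<i> = Im (complex_of_real (real_of_int n * pi))" by simp
  then show False by simp
qed

theorem lemma4p5:
  fixes p :: nat and l :: real and src tgt :: "nat \<Rightarrow> nat" and b :: "nat \<Rightarrow> real" and r :: nat
  assumes "p \<ge> 2"
    and "is_tree p src tgt"
    and "l > 0"
    and "1 \<le> r" and "r \<le> p"
  shows "\<not> sine_type (\<lambda>z. z ^ (r - 1) * char_fun l p src tgt b (z ^ 2))"
proof
  note p2 = assms(1) and T = assms(2) and l0 = assms(3) and r1 = assms(4)
  define w where "w = (\<lambda>z. z ^ (r - 1) * char_fun l p src tgt b (z ^ 2))"
  assume "sine_type (\<lambda>z. z ^ (r - 1) * char_fun l p src tgt b (z ^ 2))"
  then obtain h1 M2 where M2: "\<forall>x::real. norm (w (Complex x h1)) \<le> M2"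
    unfolding sine_type_def w_def by blast
  define g where "g \<zeta> = det (Mg p src tgt b (sin \<zeta>) (cos \<zeta>) 0)" for \<zeta>
  have gh: "g holomorphic_on UNIV" unfolding g_def
    by (rule Mg_det_holo[OF holomorphic_on_sin holomorphic_on_cos holomorphic_on_const])
  have gi: "g \<i> \<noteq> 0" unfolding g_def
    by (rule Mg_nonsing[OF T p2 sin_i_ne sin_cos_squared_add cos_i_gt])
  have "\<exists>t. g (Complex t (h1*l)) \<noteq> 0"
  proof (rule ccontr)
    assume "\<not> (\<exists>t. g (Complex t (h1*l)) \<noteq> 0)"
    then have z: "\<And>t. g (Complex t (h1*l)) = 0" by simp
    have "g \<i> = 0"
    proof (rule analytic_continuation[OF gh open_UNIV connected_UNIV, of "{z. Im z = h1*l}" "Complex 0 (h1*l)"])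
      show "Complex 0 (h1*l) islimpt {z. Im z = h1*l}" unfolding islimpt_approachable
      proof (intro allI impI)
        fix e :: real assume e: "e > 0"
        show "\<exists>x'\<in>{z. Im z = h1 * l}. x' \<noteq> Complex 0 (h1 * l) \<and> dist x' (Complex 0 (h1 * l)) < e"
          using e by (intro bexI[of _ "Complex (e/2) (h1*l)"]) (auto simp: dist_norm complex_diff complex_norm)
      qed
      show "g z = 0" if "z \<in> {z. Im z = h1*l}" for z
      proof -
        have "z = Complex (Re z) (h1*l)" using that by (simp add: complex_eq_iff)
        then show ?thesis using z[of "Re z"] by simp
      qed
    qed auto
    with gi show False by simp
  qed
  then obtain t0 where t0: "g (Complex t0 (h1*l)) \<noteq> 0" by blast
  define x0 where "x0 = t0 / l"
  define \<zeta>0 where "\<zeta>0 = Complex t0 (h1*l)"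
  define S0 where "S0 = sin \<zeta>0"
  define C0 where "C0 = cos \<zeta>0"
  define re where "re n = x0 + 2*pi*real n / l" for n :: nat
  define zn where "zn n = Complex (re n) h1" for n
  have znl: "zn n * of_real l = \<zeta>0 + of_real (2*pi*real n)" for n
    using l0 unfolding zn_def re_def \<zeta>0_def x0_def by (simp add: complex_eq_iff field_simps)
  have s2: "sin (complex_of_real (2*pi*real n)) = 0" "cos (complex_of_real (2*pi*real n)) = 1" for n
  proof -
    have a: "sin (2*pi*real n) = 0" "cos (2*pi*real n) = 1"
      using sin_int_2pin[of "int n"] cos_int_2pin[of "int n"] by simp_all
    show "sin (complex_of_real (2*pi*real n)) = 0" by (subst sin_of_real) (simp only: a of_real_0)
    show "cos (complex_of_real (2*pi*real n)) = 1" by (subst cos_of_real) (simp only: a of_real_1)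
  qed
  have sinn: "sin (zn n * of_real l) = S0" and cosn: "cos (zn n * of_real l) = C0" for n
    unfolding znl S0_def C0_def by (simp_all only: sin_add cos_add s2) simp_all
  define D where "D n = det (Mg p src tgt b S0 C0 (1 / zn n))" for n
  have wz: "w (zn n) = zn n ^ r * D n" if nz: "zn n \<noteq> 0" for n
  proof -
    have "char_fun l p src tgt b (zn n ^ 2) =
      (\<Prod>i=0..<2*(p-1). if prin p src tgt i then zn n else 1) * (\<Prod>j=0..<2*(p-1). if even j then 1 / zn n else 1) * D n"
      unfolding char_fun_def D_def
    proof (rule det_scale[OF _ Mg_carrier])
      show "char_matrix l p src tgt b ((zn n)^2) \<in> carrier_mat (2*(p-1)) (2*(p-1))" by (simp add: char_matrix_def)
      fix i j assume ij: "i < 2*(p-1)" "j < 2*(p-1)"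
      show "char_matrix l p src tgt b ((zn n)^2) $$ (i, j) = (if prin p src tgt i then zn n else 1) * Mg p src tgt b S0 C0 (1 / zn n) $$ (i, j) * (if even j then 1 / zn n else 1)"
        using entry_scale[OF nz ij, of l src tgt b] unfolding sinn cosn .
    qed
    also have "\<dots> = zn n ^ p * (1 / zn n) ^ (p-1) * D n" unfolding prod_rows[OF T p2] prod_cols ..
    finally have cf: "char_fun l p src tgt b (zn n ^ 2) = zn n ^ p * (1 / zn n) ^ (p-1) * D n" .
    have pe: "zn n ^ p = zn n * zn n ^ (p-1)"
    proof -
      have "p = Suc (p-1)" using p2 by simp
      then show ?thesis by (metis power_Suc)
    qed
    have re': "zn n ^ r = zn n ^ (r-1) * zn n"
    proof -
      have "r = Suc (r-1)" using r1 by simp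
      then show ?thesis by (metis power_Suc2)
    qed
    show ?thesis unfolding w_def cf pe re' using nz by (simp add: power_one_over)
  qed
  have re_top: "filterlim re at_top sequentially"
  proof -
    have e: "re = (\<lambda>n. x0 + (2*pi/l) * real n)" unfolding re_def by (auto simp: field_simps)
    show ?thesis unfolding e
      by (rule filterlim_tendsto_add_at_top[OF tendsto_const filterlim_tendsto_pos_mult_at_top[OF tendsto_const _ filterlim_real_sequentially]])
         (use l0 in simp)
  qed
  have zn_inf: "filterlim zn at_infinity sequentially"
    unfolding filterlim_at_infinity_conv_norm_at_top
  proof (rule filterlim_at_top_mono[OF re_top always_eventually], rule allI)
    fix n show "re n \<le> norm (zn n)" unfolding zn_def using complex_Re_le_cmod[of "Complex (re n) h1"] by simp
  qed
  have inv0: "(\<lambda>n. 1 / zn n) \<longlonglongrightarrow> 0"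
    using filterlim_compose[OF tendsto_inverse_0 zn_inf] by (simp add: inverse_eq_divide o_def)
  define \<phi> where "\<phi> e = det (Mg p src tgt b S0 C0 e)" for e
  have ph: "\<phi> holomorphic_on UNIV" unfolding \<phi>_def
    using Mg_det_holo[where f="\<lambda>_. S0" and g="\<lambda>_. C0" and h="\<lambda>x. x" and S=UNIV and p=p and src=src and tgt=tgt and b=b]
    by (simp add: holomorphic_on_const holomorphic_on_ident)
  then have "continuous_on UNIV \<phi>" by (rule holomorphic_on_imp_continuous_on)
  then have "isCont \<phi> 0" using continuous_on_eq_continuous_at[OF open_UNIV] by blast
  then have Dlim: "D \<longlonglongrightarrow> \<phi> 0" unfolding D_def \<phi>_def using isCont_tendsto_compose[OF _ inv0] by blast
  have g0: "\<phi> 0 = g \<zeta>0" unfolding \<phi>_def g_def S0_def C0_def ..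
  define c where "c = norm (g \<zeta>0) / 2"
  have c0: "c > 0" using t0 unfolding c_def \<zeta>0_def by simp
  have "eventually (\<lambda>n. norm (D n) > c) sequentially"
    using tendsto_norm[OF Dlim] c0 unfolding g0 c_def by (intro order_tendstoD(1)) auto
  moreover have "eventually (\<lambda>n. re n > max 1 (M2 / c)) sequentially"
    using re_top unfolding filterlim_at_top_dense by blast
  ultimately have "eventually (\<lambda>n. norm (D n) > c \<and> re n > max 1 (M2 / c)) sequentially"
    by (rule eventually_conj)
  then obtain n where n: "norm (D n) > c" "re n > max 1 (M2 / c)"
    unfolding eventually_sequentially by blast
  have nzn: "norm (zn n) \<ge> re n" unfolding zn_def using complex_Re_le_cmod[of "Complex (re n) h1"] by simp
  then have nz: "zn n \<noteq> 0" using n(2) by auto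
  have "norm (zn n) \<ge> 1" using nzn n(2) by simp
  then have "norm (zn n) ^ r \<ge> norm (zn n) ^ 1" using r1 by (intro power_increasing) auto
  then have X: "norm (zn n) ^ r \<ge> max 1 (M2 / c)" using nzn n(2) by simp
  have "norm (zn n) ^ r * norm (D n) \<ge> max 1 (M2 / c) * norm (D n)"
    by (rule mult_right_mono[OF X norm_ge_zero])
  moreover have "max 1 (M2 / c) * norm (D n) > max 1 (M2 / c) * c"
    by (rule mult_strict_left_mono[OF n(1)]) simp
  moreover have "max 1 (M2 / c) * c \<ge> (M2 / c) * c"
    by (rule mult_right_mono) (use c0 in auto)
  moreover have "(M2 / c) * c = M2" using c0 by simp
  ultimately have "norm (zn n) ^ r * norm (D n) > M2" by linarith
  then have "norm (w (zn n)) > M2" using c0 wz[OF nz] by (simp add: norm_mult norm_power)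
  moreover have "norm (w (zn n)) \<le> M2" using M2 unfolding zn_def by blast
  ultimately show False by simp
qed

end
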